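(* Let $n\in\mathbf{N}$ and $A\subset[n]$ have property P. Define $$B_2=3\cdot\big(A\cap(\tfrac n9,\tfrac n6]\big)\ \cup\ 2\cdot\big(A\cap(\tfrac n6,\tfrac n4]\big)\ \cup\ \tfrac32\cdot\big(A\cap2\mathbf{Z}\cap(\tfrac n4,\tfrac n3]\big)\ \cup\ \big(A\cap(1+2\mathbf{Z})\cap(\tfrac n4,\tfrac n3]\big)\ \cup\ \big(A\cap(\tfrac n3,\tfrac n2]\big)\subset\left(\tfrac n4,\tfrac n2\right],$$ and $B_2^{\mathrm R}=B_2\cap(\frac n3,\frac n2]$. Writing $A_{(\frac23,1]}=A\cap(\frac{2n}{3},n]$, at least one of the following holds: $$2|B_2^{\mathrm R}|+|A_{(\frac23,1]}|\leqslant\frac n3+4,\qquad\text{or}\qquad |B_2|+|A_{(\frac23,1]}|\leqslant\frac n4+4.$$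
   Context: A set $A\subset\mathbf{N}$ has property P if there are no $x,y,z\in A$ (not necessarily distinct $x,y$) with $z<x$, $z<y$ and $z\mid x+y$. Intervals denote sets of integers; $q\cdot X=\{qx:x\in X\}$. *)

theory Defs
  imports Complex_Main
begin

definition propP :: "nat set \<Rightarrow> bool" where
  "propP A \<longleftrightarrow> (\<forall>x\<in>A. \<forall>y\<in>A. \<forall>z\<in>A. \<not> (z < x \<and> z < y \<and> z dvd x + y))"

definition slice :: "nat set \<Rightarrow> nat \<Rightarrow> real \<Rightarrow> real \<Rightarrow> nat set" where
  "slice A n a b = {x \<in> A. a * real n < real x \<and> real x \<le> b * real n}"

definition B2 :: "nat set \<Rightarrow> nat \<Rightarrow> nat set" where
  "B2 A n =
     (\<lambda>x. 3 * x) ` slice A n (1/9) (1/6)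
   \<union> (\<lambda>x. 2 * x) ` slice A n (1/6) (1/4)
   \<union> (\<lambda>x. 3 * (x div 2)) ` {x \<in> slice A n (1/4) (1/3). even x}
   \<union> {x \<in> slice A n (1/4) (1/3). odd x}
   \<union> slice A n (1/3) (1/2)"

definition B2R :: "nat set \<Rightarrow> nat \<Rightarrow> nat set" where
  "B2R A n = {b \<in> B2 A n. real n / 3 < real b \<and> real b \<le> real n / 2}"

end

theory Submission
  imports Defs
begin

lemma card_mod_bound:
  fixes lo hi :: real and q e :: nat
  assumes q: "0 < q" and lh: "lo \<le> hi"
  shows "real (card {x::nat. lo < real x \<and> real x \<le> hi \<and> x mod q = e}) \<le> (hi - lo) / q + 1"
proof -
  define S where "S = {x::nat. lo < real x \<and> real x \<le> hi \<and> x mod q = e}"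
  have Ssub: "S \<subseteq> {..nat \<lceil>hi\<rceil>}"
  proof
    fix x assume "x \<in> S"
    then have "real x \<le> hi" unfolding S_def by simp
    then have "real x \<le> real (nat \<lceil>hi\<rceil>)" by linarith
    then show "x \<in> {..nat \<lceil>hi\<rceil>}" by (simp del: of_nat_nat)
  qed
  have fin: "finite S" using Ssub finite_subset by blast
  show ?thesis
  proof (cases "S = {}")
    case True
    then show ?thesis using lh q unfolding S_def[symmetric] by simp
  next
    case False
    define a where "a = Min S"
    define b where "b = Max S"
    have aS: "a \<in> S" using fin False a_def by simp
    have bS: "b \<in> S" using fin False b_def by simp
    have inj: "inj_on (\<lambda>x. x div q) S"
    proof (rule inj_onI)
      fix x y assume "x \<in> S" "y \<in> S" "x div q = y div q"
      then have "x mod q = y mod q" unfolding S_def by simp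
      then show "x = y" using \<open>x div q = y div q\<close> by (metis div_mult_mod_eq)
    qed
    have sub: "(\<lambda>x. x div q) ` S \<subseteq> {a div q .. b div q}"
      using fin by (auto simp: a_def b_def intro!: div_le_mono)
    have "card S = card ((\<lambda>x. x div q) ` S)" using inj by (simp add: card_image)
    also have "\<dots> \<le> card {a div q .. b div q}" using sub by (intro card_mono) auto
    also have "\<dots> = Suc (b div q) - a div q" by simp
    finally have c1: "card S \<le> Suc (b div q) - a div q" .
    have ab: "a \<le> b" using fin aS a_def b_def by simp
    have "a div q \<le> b div q" using ab by (rule div_le_mono)
    have ea: "a = q * (a div q) + e" using aS unfolding S_def by (metis (mono_tags) div_mult_mod_eq mem_Collect_eq mult.commute)
    have eb: "b = q * (b div q) + e" using bS unfolding S_def by (metis (mono_tags) div_mult_mod_eq mem_Collect_eq mult.commute)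
    have "real b - real a = real q * (real (b div q) - real (a div q))"
      using ea eb by (metis (no_types, lifting) add_diff_cancel_right of_nat_add of_nat_mult right_diff_distrib')
    moreover have "real b - real a < hi - lo" using aS bS unfolding S_def by auto
    ultimately have "real (b div q) - real (a div q) < (hi - lo) / q"
      using q by (simp add: field_simps)
    moreover have "real (card S) \<le> real (b div q) - real (a div q) + 1"
      using c1 \<open>a div q \<le> b div q\<close> by linarith
    ultimately show ?thesis unfolding S_def by linarith
  qed
qed

lemma B2_facts:
  assumes "b \<in> B2 A n"
  shows "\<exists>a\<in>A. a \<le> b \<and> a dvd 2*b"
    and "real n / 3 < real b \<and> real b \<le> real n / 2 \<or> (b \<in> A \<and> odd b \<and> real n / 4 < real b \<and> real b \<le> real n / 3)"
proof -
  have "(\<exists>x\<in>A. b = 3*x \<and> 1/9 * real n < real x \<and> real x \<le> 1/6 * real n)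
      \<or> (\<exists>x\<in>A. b = 2*x \<and> 1/6 * real n < real x \<and> real x \<le> 1/4 * real n)
      \<or> (\<exists>x\<in>A. b = 3*(x div 2) \<and> even x \<and> 1/4 * real n < real x \<and> real x \<le> 1/3 * real n)
      \<or> (b \<in> A \<and> odd b \<and> 1/4 * real n < real b \<and> real b \<le> 1/3 * real n)
      \<or> (b \<in> A \<and> 1/3 * real n < real b \<and> real b \<le> 1/2 * real n)"
    using assms unfolding B2_def slice_def by blast
  note H = this
  show "\<exists>a\<in>A. a \<le> b \<and> a dvd 2*b"
    using H
  proof (elim disjE bexE conjE)
    fix x assume "x \<in> A" "b = 3*(x div 2)" "even x"
    then show "\<exists>a\<in>A. a \<le> b \<and> a dvd 2*b" by (intro bexI[of _ x]) (auto elim!: evenE)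
  next
    fix x assume "x \<in> A" "b = 3*x"
    then show ?thesis by (intro bexI[of _ x]) auto
  next
    fix x assume "x \<in> A" "b = 2*x"
    then show ?thesis by (intro bexI[of _ x]) auto
  qed auto
  show "real n / 3 < real b \<and> real b \<le> real n / 2 \<or> (b \<in> A \<and> odd b \<and> real n / 4 < real b \<and> real b \<le> real n / 3)"
    using H
  proof (elim disjE bexE conjE)
    fix x assume "b = 3*(x div 2)" "even x" "1/4 * real n < real x" "real x \<le> 1/3 * real n"
    then obtain y where "x = 2*y" "b = 3*y" by (auto elim!: evenE)
    then show ?thesis
      using \<open>1/4 * real n < real x\<close> \<open>real x \<le> 1/3 * real n\<close> by auto
  qed auto
qed

lemma odd4: "odd (c::nat) \<longleftrightarrow> c mod 4 = 1 \<or> c mod 4 = 3"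
proof -
  have "c mod 4 < 4" by simp
  then have r: "c mod 4 = 0 \<or> c mod 4 = 1 \<or> c mod 4 = 2 \<or> c mod 4 = 3" by linarith
  have "odd c \<longleftrightarrow> odd (c mod 4)" using dvd_mod_iff[of 2 4 c] by simp
  then show ?thesis using r by auto
qed

lemma sum4: assumes "(u::nat) mod 4 = 1" "(v::nat) mod 4 = 3" shows "4 dvd u + v"
proof -
  have "(u + v) mod 4 = (u mod 4 + v mod 4) mod 4" by (simp add: mod_add_eq)
  then have "(u + v) mod 4 = 0" using assms by simp
  then show ?thesis by (simp add: mod_eq_0_iff_dvd)
qed
lemma L2: assumes "(u::nat) mod 4 = 1" "(v::nat) mod 4 = 3" shows "u + v = 2 * ((u + v) div 2) \<and> ((u + v) div 2) mod 2 = 0"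
proof -
  obtain k where k: "u + v = 4*k" using sum4[OF assms] by (auto elim: dvdE)
  have "(u + v) div 2 = 2*k" using k by simp
  then show ?thesis using k by simp
qed
lemma L3: assumes "(x::nat) mod 4 = 3" "(y::nat) mod 4 = 3" "(p::nat) mod 4 = 1" "(q::nat) mod 4 = 1" "(p + x) div 2 = (q + y) div 2" shows "p + x = q + y"
  using L2[OF assms(3,1)] L2[OF assms(4,2)] assms(5) by metis
lemma near_odd: assumes "3*(z::nat) \<le> w + 2" "w \<le> 3*z + 2" "3*z' \<le> w + 2" "w \<le> 3*z' + 2" "odd z" "odd z'" shows "z = z'"
proof -
  have "z \<le> z' + 1" "z' \<le> z + 1" using assms(1-4) by linarith+
  then have "z = z' \<or> z = Suc z' \<or> z' = Suc z" by linarith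
  then show ?thesis using assms(5,6) by auto
qed
lemma mod4_shift: assumes "odd (z::nat)" "(e::nat) = 1 \<or> e = 3" "(3*z) mod 4 \<noteq> e" shows "(3*z - 2) mod 4 = e \<and> (3*z + 2) mod 4 = e"
proof -
  obtain t where "z = 4*t + 1 \<or> z = 4*t + 3" using assms(1) odd4
    by (metis div_mult_mod_eq mult.commute)
  then show ?thesis
  proof
    assume z: "z = 4*t + 1"
    have a: "3*z = 3 + 4*(3*t)" "3*z - 2 = 1 + 4*(3*t)" "3*z + 2 = 1 + 4*(3*t+1)" using z by simp_all
    show ?thesis using assms(2,3) unfolding a(2,3) unfolding a(1) mod_mult_self2 by simp
  next
    assume z: "z = 4*t + 3"
    have a: "3*z = 1 + 4*(3*t+2)" "3*z - 2 = 3 + 4*(3*t+1)" "3*z + 2 = 3 + 4*(3*t+2)" using z by simp_all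
    show ?thesis using assms(2,3) unfolding a(2,3) unfolding a(1) mod_mult_self2 by simp
  qed
qed

theorem mainTheorem14:
  fixes n :: nat and A :: "nat set"
  assumes "A \<subseteq> {1..n}" and "propP A"
  shows "2 * real (card (B2R A n)) + real (card (slice A n (2/3) 1)) \<le> real n / 3 + 4
       \<or> real (card (B2 A n)) + real (card (slice A n (2/3) 1)) \<le> real n / 4 + 4"
proof -
  note AS = assms(1)
  have PP: "\<And>x y z. x \<in> A \<Longrightarrow> y \<in> A \<Longrightarrow> z \<in> A \<Longrightarrow> z < x \<Longrightarrow> z < y \<Longrightarrow> z dvd x + y \<Longrightarrow> False"
    using assms(2) unfolding propP_def by blast
  have finA: "finite A" using AS finite_subset by blast
  have Apos: "\<And>x. x \<in> A \<Longrightarrow> 1 \<le> x" using AS by auto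
  define C where "C = slice A n (2/3) 1"
  define R where "R = B2R A n"
  define L where "L = {x\<in>A. odd x \<and> real n / 4 < real x \<and> real x \<le> real n / 3}"
  define E where "E = {x::nat. 2/3 * real n < real x \<and> real x \<le> real n \<and> x mod 2 = 0}"
  define D where "D = (\<lambda>b. 2*b) ` R"
  define C0 where "C0 = {c\<in>C. even c}"
  define C1 where "C1 = {c\<in>C. odd c}"
  define P where "P = {c\<in>C. c mod 4 = 1}"
  define Q where "Q = {c\<in>C. c mod 4 = 3}"
  have memC: "\<And>c. c \<in> C \<Longrightarrow> c \<in> A \<and> 2/3 * real n < real c \<and> real c \<le> real n"
    unfolding C_def slice_def by auto
  have finC: "finite C" using finA unfolding C_def slice_def by auto
  have memR: "\<And>b. b \<in> R \<Longrightarrow> (\<exists>a\<in>A. a \<le> b \<and> a dvd 2*b) \<and> real n / 3 < real b \<and> real b \<le> real n / 2"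
    unfolding R_def B2R_def using B2_facts(1) by blast
  have finR: "finite R"
  proof (rule finite_subset)
    show "R \<subseteq> {..n}"
    proof
      fix b assume "b \<in> R"
      then have "real b \<le> real n / 2" using memR by blast
      then show "b \<in> {..n}" by simp
    qed
  qed simp
  have finE: "finite E"
  proof (rule finite_subset)
    show "E \<subseteq> {..n}" unfolding E_def by auto
  qed simp
  have F1: "\<And>b. b \<in> R \<Longrightarrow> 2*b \<notin> C"
  proof
    fix b assume b: "b \<in> R" and c: "2*b \<in> C"
    obtain a where a: "a \<in> A" "a \<le> b" "a dvd 2*b" using memR[OF b] by blast
    have "real n / 3 < real b" using memR[OF b] by blast
    then have "0 < b" by (cases b) auto
    have "a dvd 2*b + 2*b" by (intro dvd_add a(3))
    then show False using PP[of "2*b" "2*b" a] memC[OF c] a \<open>0 < b\<close> by auto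
  qed
  have F2: "\<And>b c c'. b \<in> R \<Longrightarrow> c \<in> C \<Longrightarrow> c' \<in> C \<Longrightarrow> c + c' \<noteq> 4*b"
  proof
    fix b c c' assume b: "b \<in> R" and c: "c \<in> C" and c': "c' \<in> C" and eq: "c + c' = 4*b"
    obtain a where a: "a \<in> A" "a \<le> b" "a dvd 2*b" using memR[OF b] by blast
    have "real b \<le> real n / 2" using memR[OF b] by blast
    then have "real a < real c" "real a < real c'" using a(2) memC[OF c] memC[OF c'] by linarith+
    then have "a < c" "a < c'" by simp_all
    have "a dvd 2 * (2*b)" using a(3) by (rule dvd_mult)
    then have "a dvd c + c'" using eq by simp
    then show False using PP[of c c' a] memC[OF c] memC[OF c'] a \<open>a < c\<close> \<open>a < c'\<close> by auto
  qed
  have F3: "\<And>z. z \<in> L \<Longrightarrow> 3*z \<notin> C"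
  proof
    fix z assume z: "z \<in> L" and c: "3*z \<in> C"
    have zA: "z \<in> A" using z unfolding L_def by simp
    have "1 \<le> z" using Apos zA by simp
    have "z dvd 3*z + 3*z" by (intro dvd_add) simp_all
    then show False using PP[of "3*z" "3*z" z] memC[OF c] zA \<open>1 \<le> z\<close> by auto
  qed
  have F4: "\<And>z c c'. z \<in> L \<Longrightarrow> c \<in> C \<Longrightarrow> c' \<in> C \<Longrightarrow> c + c' \<noteq> 6*z"
  proof
    fix z c c' assume z: "z \<in> L" and c: "c \<in> C" and c': "c' \<in> C" and eq: "c + c' = 6*z"
    have zA: "z \<in> A" and zr: "real z \<le> real n / 3" using z unfolding L_def by auto
    then have "real z < real c" "real z < real c'" using memC[OF c] memC[OF c'] by linarith+
    then have "z < c" "z < c'" by simp_all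
    have "z dvd c + c'" using eq by simp
    then show False using PP[of c c' z] memC[OF c] memC[OF c'] zA \<open>z < c\<close> \<open>z < c'\<close> by auto
  qed
  have cardE: "real (card E) \<le> real n / 6 + 1"
  proof -
    have "real (card E) \<le> (real n - 2/3 * real n) / real (2::nat) + 1"
      unfolding E_def by (rule card_mod_bound) auto
    then show ?thesis by simp
  qed
  have DE: "D \<subseteq> E"
  proof
    fix d assume "d \<in> D"
    then obtain b where b: "b \<in> R" "d = 2*b" unfolding D_def by blast
    then show "d \<in> E" using memR[OF b(1)] unfolding E_def by auto
  qed
  have cardD: "card D = card R" unfolding D_def by (rule card_image) (auto simp: inj_on_def)
  have C0E: "C0 \<subseteq> E" unfolding C0_def E_def using memC by auto
  have DC0: "D \<inter> C0 = {}" unfolding D_def C0_def using F1 by auto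
  have finC0: "finite C0" using finC unfolding C0_def by simp
  have rk0: "card R + card C0 \<le> card E"
  proof -
    have "card (D \<union> C0) = card D + card C0"
      by (rule card_Un_disjoint) (use finR finC0 DC0 in \<open>auto simp: D_def\<close>)
    moreover have "card (D \<union> C0) \<le> card E" using DE C0E finE by (intro card_mono) auto
    ultimately show ?thesis using cardD by simp
  qed
  have finC1: "finite C1" using finC unfolding C1_def by simp
  have finP: "finite P" using finC unfolding P_def by simp
  have finQ: "finite Q" using finC unfolding Q_def by simp
  have C01: "card C = card C0 + card C1"
  proof -
    have "C = C0 \<union> C1" unfolding C0_def C1_def by auto
    moreover have "card (C0 \<union> C1) = card C0 + card C1"
      by (rule card_Un_disjoint) (use finC0 finC1 in \<open>auto simp: C0_def C1_def\<close>)
    ultimately show ?thesis by simp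
  qed
  have C1PQ: "card C1 = card P + card Q"
  proof -
    have "C1 = P \<union> Q" unfolding C1_def P_def Q_def using odd4 by auto
    moreover have "card (P \<union> Q) = card P + card Q"
      by (rule card_Un_disjoint) (use finP finQ in \<open>auto simp: P_def Q_def\<close>)
    ultimately show ?thesis by simp
  qed
  show ?thesis
  proof (cases "P \<noteq> {} \<and> Q \<noteq> {}")
    case True
    define pm where "pm = Min P"
    define qM where "qM = Max Q"
    have pmP: "pm \<in> P" using True finP pm_def by simp
    have qMQ: "qM \<in> Q" using True finQ qM_def by simp
    define M1 where "M1 = (\<lambda>q. (pm + q) div 2) ` Q"
    define M2 where "M2 = (\<lambda>p. (p + qM) div 2) ` P"
    have pm1: "pm mod 4 = 1" and qM3: "qM mod 4 = 3" using pmP qMQ unfolding P_def Q_def by auto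
    have cM1: "card M1 = card Q" unfolding M1_def
    proof (rule card_image, rule inj_onI)
      fix x y assume "x \<in> Q" "y \<in> Q" "(pm + x) div 2 = (pm + y) div 2"
      moreover have "x mod 4 = 3" "y mod 4 = 3" using \<open>x \<in> Q\<close> \<open>y \<in> Q\<close> unfolding Q_def by auto
      ultimately show "x = y" using pm1 L3[of x y pm pm] by simp
    qed
    have cM2: "card M2 = card P" unfolding M2_def
    proof (rule card_image, rule inj_onI)
      fix x y assume "x \<in> P" "y \<in> P" "(x + qM) div 2 = (y + qM) div 2"
      moreover have "x mod 4 = 1" "y mod 4 = 1" using \<open>x \<in> P\<close> \<open>y \<in> P\<close> unfolding P_def by auto
      ultimately show "x = y" using qM3 L3[of qM qM x y] by (simp add: add.commute)
    qed
    have midE: "\<And>u v. u \<in> P \<Longrightarrow> v \<in> Q \<Longrightarrow> (u + v) div 2 \<in> E \<and> (u + v) div 2 \<notin> D"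
    proof -
      fix u v assume u: "u \<in> P" and v: "v \<in> Q"
      have um: "u mod 4 = 1" and vm: "v mod 4 = 3" and uC: "u \<in> C" and vC: "v \<in> C"
        using u v unfolding P_def Q_def by auto
      have ev: "(u + v) = 2 * ((u + v) div 2)" and ev2: "((u + v) div 2) mod 2 = 0" using L2[OF um vm] by auto
      have "real (u + v) = 2 * real ((u + v) div 2)" using ev by (metis of_nat_mult of_nat_numeral)
      then have re: "real ((u + v) div 2) = (real u + real v) / 2" by simp
      have inE: "(u + v) div 2 \<in> E" unfolding E_def using re ev2 memC[OF uC] memC[OF vC] by auto
      have "(u + v) div 2 \<notin> D"
      proof
        assume "(u + v) div 2 \<in> D"
        then obtain b where b: "b \<in> R" "(u + v) div 2 = 2*b" unfolding D_def by blast
        then have "u + v = 4*b" using ev by simp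
        then show False using F2[OF b(1) uC vC] by simp
      qed
      then show "(u + v) div 2 \<in> E \<and> (u + v) div 2 \<notin> D" using inE by simp
    qed
    have MED: "M1 \<union> M2 \<subseteq> E" "(M1 \<union> M2) \<inter> D = {}"
      unfolding M1_def M2_def using midE pmP qMQ by auto
    have MI: "M1 \<inter> M2 \<subseteq> {(pm + qM) div 2}"
    proof
      fix x assume "x \<in> M1 \<inter> M2"
      then obtain q p where q: "q \<in> Q" "x = (pm + q) div 2" and p: "p \<in> P" "x = (p + qM) div 2"
        unfolding M1_def M2_def by blast
      have "pm \<le> p" using p(1) finP pm_def by simp
      have "q \<le> qM" using q(1) finQ qM_def by simp
      have m: "pm mod 4 = 1" "p mod 4 = 1" "q mod 4 = 3" "qM mod 4 = 3"
        using p q pmP qMQ unfolding P_def Q_def by auto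
      have "pm + q = p + qM" using q(2) p(2) m L3[of q qM pm p] by (simp add: add.commute)
      then have "p = pm" "q = qM" using \<open>pm \<le> p\<close> \<open>q \<le> qM\<close> by linarith+
      then show "x \<in> {(pm + qM) div 2}" using q by simp
    qed
    have finM: "finite M1" "finite M2" unfolding M1_def M2_def using finP finQ by auto
    have "card (M1 \<inter> M2) \<le> 1" using card_mono[OF _ MI] by simp
    moreover have "card (M1 \<union> M2) + card (M1 \<inter> M2) = card M1 + card M2"
      using card_Un_Int[OF finM] by simp
    ultimately have cM: "card P + card Q \<le> card (M1 \<union> M2) + 1" using cM1 cM2 by linarith
    have "card (D \<union> (M1 \<union> M2)) = card D + card (M1 \<union> M2)"
      by (rule card_Un_disjoint) (use finR finM MED in \<open>auto simp: D_def\<close>)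
    moreover have "card (D \<union> (M1 \<union> M2)) \<le> card E" using DE MED finE by (intro card_mono) auto
    ultimately have rM: "card R + card (M1 \<union> M2) \<le> card E" using cardD by simp
    have "2 * card R + card C \<le> 2 * card E + 1" using rM rk0 cM C01 C1PQ by linarith
    then have "2 * real (card R) + real (card C) \<le> 2 * real (card E) + 1" by linarith
    then have "2 * real (card R) + real (card C) \<le> real n / 3 + 4" using cardE by linarith
    then show ?thesis unfolding R_def C_def by simp
  next
    case False
    define eps :: nat where "eps = (if P = {} then 3 else 1)"
    have eps: "eps = 1 \<or> eps = 3" unfolding eps_def by simp
    have C1eps: "\<And>c. c \<in> C1 \<Longrightarrow> c mod 4 = eps"
    proof -
      fix c assume c: "c \<in> C1"
      then have "c mod 4 = 1 \<or> c mod 4 = 3" unfolding C1_def using odd4 by simp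
      then show "c mod 4 = eps" using c False unfolding eps_def P_def Q_def C1_def by auto
    qed
    define g where "g = (\<lambda>z::nat. if (3*z) mod 4 = eps then 3*z else if 3*z - 2 \<notin> C then 3*z - 2 else 3*z + 2)"
    have gc: "\<And>z. g z = 3*z \<or> g z = 3*z - 2 \<or> g z = 3*z + 2" unfolding g_def by auto
    define S where "S = {x::nat. 2/3 * real n - 2 < real x \<and> real x \<le> real n + 2 \<and> x mod 4 = eps}"
    have cardS: "real (card S) \<le> real n / 12 + 2"
    proof -
      have "real (card S) \<le> ((real n + 2) - (2/3 * real n - 2)) / real (4::nat) + 1"
        unfolding S_def by (rule card_mod_bound) auto
      moreover have "((real n + 2) - (2/3 * real n - 2)) / real (4::nat) + 1 = real n / 12 + 2" by (simp add: field_simps)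
      ultimately show ?thesis by linarith
    qed
    have finS: "finite S"
    proof (rule finite_subset)
      show "S \<subseteq> {..n+2}"
      proof
        fix x assume "x \<in> S"
        then have "real x \<le> real (n + 2)" unfolding S_def by simp
        then show "x \<in> {..n+2}" by (simp del: of_nat_add)
      qed
    qed simp
    have finL: "finite L" using finA unfolding L_def by simp
    have gL: "\<And>z. z \<in> L \<Longrightarrow> g z \<in> S \<and> g z \<notin> C"
    proof -
      fix z assume z: "z \<in> L"
      have zA: "z \<in> A" and oz: "odd z" and zl: "real n / 4 < real z" and zu: "real z \<le> real n / 3"
        using z unfolding L_def by auto
      have "1 \<le> z" using Apos zA by simp
      have notC: "g z \<notin> C"
      proof (cases "(3*z) mod 4 = eps")
        case True then show ?thesis using F3[OF z] unfolding g_def by simp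
      next
        case False
        show ?thesis
        proof (cases "3*z - 2 \<in> C")
          case True
          have "3*z + 2 \<notin> C"
          proof
            assume "3*z + 2 \<in> C"
            moreover have "(3*z - 2) + (3*z + 2) = 6*z" using \<open>1 \<le> z\<close> by simp
            ultimately show False using F4[OF z True] by blast
          qed
          then show ?thesis using False True unfolding g_def by simp
        qed (use False in \<open>simp add: g_def\<close>)
      qed
      have md: "g z mod 4 = eps"
        using mod4_shift[OF oz eps] unfolding g_def by auto
      have "real (3*z) - 2 \<le> real (g z)" "real (g z) \<le> real (3*z) + 2"
        using gc[of z] \<open>1 \<le> z\<close> by (auto simp: of_nat_diff)
      then have "2/3 * real n - 2 < real (g z)" "real (g z) \<le> real n + 2" using zl zu by auto
      then show "g z \<in> S \<and> g z \<notin> C" using md notC unfolding S_def by simp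
    qed
    have injg: "inj_on g L"
    proof (rule inj_onI)
      fix z z' assume z: "z \<in> L" and z': "z' \<in> L" and eq: "g z = g z'"
      have "odd z" "odd z'" using z z' unfolding L_def by auto
      moreover have "3*z \<le> g z + 2" "g z \<le> 3*z + 2" "3*z' \<le> g z' + 2" "g z' \<le> 3*z' + 2"
        using gc[of z] gc[of z'] by auto
      ultimately show "z = z'" using eq near_odd by metis
    qed
    have C1S: "C1 \<subseteq> S" unfolding S_def using C1eps memC unfolding C1_def by force
    have "card (g ` L \<union> C1) = card (g ` L) + card C1"
      by (rule card_Un_disjoint) (use finL finC1 gL in \<open>auto simp: C1_def\<close>)
    moreover have "card (g ` L \<union> C1) \<le> card S" using gL C1S finS by (intro card_mono) auto
    moreover have "card (g ` L) = card L" using injg by (rule card_image)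
    ultimately have LC1: "card L + card C1 \<le> card S" by simp
    have B2sub: "B2 A n \<subseteq> R \<union> L"
    proof
      fix b assume b: "b \<in> B2 A n"
      show "b \<in> R \<union> L" using B2_facts(2)[OF b] b unfolding R_def B2R_def L_def by auto
    qed
    have "card (B2 A n) \<le> card (R \<union> L)" using B2sub finR finL by (intro card_mono) auto
    also have "\<dots> \<le> card R + card L" by (rule card_Un_le)
    finally have "card (B2 A n) + card C \<le> card E + card S" using rk0 LC1 C01 by linarith
    then have "real (card (B2 A n)) + real (card C) \<le> real (card E) + real (card S)" by linarith
    then have "real (card (B2 A n)) + real (card C) \<le> real n / 4 + 4" using cardE cardS by linarith
    then show ?thesis unfolding C_def by simp
  qed
qed

end
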